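(* For all polynomials $f,g\in F[t]$ and all $a,b\in F$, $$\int_a^b (f*_\psi\partial_\psi g)(t)\,d_\psi t=(f*_\psi g)(b)-(f*_\psi g)(a)-\int_a^b\bigl((Df)*_\psi g\bigr)(t)\,d_\psi t,$$ where $D$ is the ordinary derivative.
   Context: Let $F=\mathbb R$ or $\mathbb C$ and $\psi=(\psi_n)_{n\ge0}$ a sequence in $F$ with all $\psi_n\neq0$; put $n_\psi:=\psi_{n-1}/\psi_n$ ($n\ge1$). On $F[t]$ define linear operators $\partial_\psi1=0$, $\partial_\psi t^n=n_\psi t^{n-1}$ ($n\ge1$), $\hat t_\psi t^n=\frac{n+1}{(n+1)_\psi}t^{n+1}$ ($n\ge0$). For $f=\sum_j a_jt^j$ and $g\in F[t]$ set $f*_\psi g:=\sum_j a_j\hat t_\psi^{\,j}g$. The $\psi$-antiderivative is the linear operator $\int_\psi t^n=\frac{1}{(n+1)_\psi}t^{n+1}$, and $\int_a^b h(t)\,d_\psi t:=H(b)-H(a)$ with $H=\int_\psi h$. *)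

theory Defs
  imports "HOL-Computational_Algebra.Polynomial"
begin

definition npsi :: "(nat \<Rightarrow> 'a::field) \<Rightarrow> nat \<Rightarrow> 'a" where
  "npsi psi n = psi (n - 1) / psi n"

definition dpsi :: "(nat \<Rightarrow> 'a::field) \<Rightarrow> 'a poly \<Rightarrow> 'a poly" where
  "dpsi psi g = (\<Sum>n\<in>{1..degree g}. monom (coeff g n * npsi psi n) (n - 1))"

definition that :: "(nat \<Rightarrow> 'a::field) \<Rightarrow> 'a poly \<Rightarrow> 'a poly" where
  "that psi g = (\<Sum>n\<le>degree g. monom (coeff g n * (of_nat (n + 1) / npsi psi (n + 1))) (n + 1))"

definition pstar :: "(nat \<Rightarrow> 'a::field) \<Rightarrow> 'a poly \<Rightarrow> 'a poly \<Rightarrow> 'a poly" where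
  "pstar psi f g = (\<Sum>j\<le>degree f. smult (coeff f j) ((that psi ^^ j) g))"

definition ipsi :: "(nat \<Rightarrow> 'a::field) \<Rightarrow> 'a poly \<Rightarrow> 'a poly" where
  "ipsi psi h = (\<Sum>n\<le>degree h. monom (coeff h n / npsi psi (n + 1)) (n + 1))"

definition dint :: "(nat \<Rightarrow> 'a::field) \<Rightarrow> 'a \<Rightarrow> 'a \<Rightarrow> 'a poly \<Rightarrow> 'a" where
  "dint psi a b h = poly (ipsi psi h) b - poly (ipsi psi h) a"

end

theory Submission imports Defs begin

lemma npsi_nz: "(\<forall>n. psi n \<noteq> 0) \<Longrightarrow> npsi psi n \<noteq> (0::'a::field)"
  by (simp add: npsi_def)

lemma coeff_dpsi: "coeff (dpsi psi g) n = coeff g (Suc n) * npsi psi (Suc n)"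
proof -
  have "coeff (dpsi psi g) n = (\<Sum>m\<in>{1..degree g}. if m = Suc n then coeff g m * npsi psi m else 0)"
    unfolding dpsi_def coeff_sum coeff_monom by (rule sum.cong) auto
  also have "\<dots> = coeff g (Suc n) * npsi psi (Suc n)"
    by (auto simp: coeff_eq_0)
  finally show ?thesis .
qed

lemma coeff_that: "coeff (that psi g) n = (if n = 0 then 0 else coeff g (n - 1) * (of_nat n / npsi psi n))"
proof -
  have "coeff (that psi g) n = (\<Sum>m\<le>degree g. if m = n - 1 \<and> n \<noteq> 0 then coeff g m * (of_nat (m+1) / npsi psi (m+1)) else 0)"
    unfolding that_def coeff_sum coeff_monom by (rule sum.cong) auto
  also have "\<dots> = (if n = 0 then 0 else coeff g (n - 1) * (of_nat n / npsi psi n))"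
    by (cases n) (auto simp: coeff_eq_0)
  finally show ?thesis .
qed

lemma coeff_ipsi: "coeff (ipsi psi g) n = (if n = 0 then 0 else coeff g (n - 1) / npsi psi n)"
proof -
  have "coeff (ipsi psi g) n = (\<Sum>m\<le>degree g. if m = n - 1 \<and> n \<noteq> 0 then coeff g m / npsi psi (m+1) else 0)"
    unfolding ipsi_def coeff_sum coeff_monom by (rule sum.cong) auto
  also have "\<dots> = (if n = 0 then 0 else coeff g (n - 1) / npsi psi n)"
    by (cases n) (auto simp: coeff_eq_0)
  finally show ?thesis .
qed

lemma dpsi_add: "dpsi psi (a + b) = dpsi psi a + dpsi psi b"
  by (simp add: poly_eq_iff coeff_dpsi algebra_simps)
lemma dpsi_smult: "dpsi psi (smult c a) = smult c (dpsi psi a)"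
  by (simp add: poly_eq_iff coeff_dpsi algebra_simps)
lemma dpsi_0: "dpsi psi 0 = 0"
  by (simp add: poly_eq_iff coeff_dpsi)
lemma dpsi_sum: "dpsi psi (\<Sum>j\<in>A. h j) = (\<Sum>j\<in>A. dpsi psi (h j))"
  by (induction A rule: infinite_finite_induct) (auto simp: dpsi_add dpsi_0)
lemma that_add: "that psi (a + b) = that psi a + that psi b"
  by (simp add: poly_eq_iff coeff_that algebra_simps)
lemma that_smult: "that psi (smult c a) = smult c (that psi a)"
  by (simp add: poly_eq_iff coeff_that algebra_simps)
lemma ipsi_diff: "ipsi psi (a - b) = ipsi psi a - ipsi psi b"
  by (simp add: poly_eq_iff coeff_ipsi diff_divide_distrib)

lemma comm: assumes "\<forall>n. psi n \<noteq> 0"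
  shows "dpsi psi (that psi g) = that psi (dpsi psi g) + (g :: 'a::field poly)"
proof -
  have nz: "\<And>n. npsi psi n \<noteq> 0" using npsi_nz[OF assms] .
  show ?thesis
    by (auto simp: poly_eq_iff coeff_dpsi coeff_that nz field_simps)
qed

lemma comm_pow: assumes "\<forall>n. psi n \<noteq> 0"
  shows "dpsi psi ((that psi ^^ j) g) = (that psi ^^ j) (dpsi psi g) + smult (of_nat j) ((that psi ^^ (j - 1)) (g :: 'a::field poly))"
proof (induction j)
  case 0 then show ?case by simp
next
  case (Suc j)
  have "dpsi psi ((that psi ^^ Suc j) g) = that psi (dpsi psi ((that psi ^^ j) g)) + (that psi ^^ j) g"
    using comm[OF assms] by simp
  also have "\<dots> = (that psi ^^ Suc j) (dpsi psi g) + smult (of_nat j) ((that psi ^^ j) g) + (that psi ^^ j) g"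
    using Suc by (cases j) (auto simp: that_add that_smult)
  also have "\<dots> = (that psi ^^ Suc j) (dpsi psi g) + smult (of_nat (Suc j)) ((that psi ^^ (Suc j - 1)) g)"
    by (simp add: algebra_simps smult_add_left)
  finally show ?case .
qed

lemma pstar_eq: assumes "degree f \<le> N"
  shows "pstar psi f g = (\<Sum>j\<le>N. smult (coeff f j) ((that psi ^^ j) g))"
proof -
  have "(\<Sum>j\<le>N. smult (coeff f j) ((that psi ^^ j) g)) = (\<Sum>j\<le>degree f. smult (coeff f j) ((that psi ^^ j) g))"
    by (rule sum.mono_neutral_right) (use assms in \<open>auto simp: coeff_eq_0\<close>)
  then show ?thesis by (simp add: pstar_def)
qed

lemma prod_rule: assumes "\<forall>n. psi n \<noteq> 0"
  shows "dpsi psi (pstar psi f g) = pstar psi f (dpsi psi g) + pstar psi (pderiv f) (g :: 'a::field poly)"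
proof -
  define N where "N = degree f"
  have d': "degree (pderiv f) \<le> N" unfolding N_def
    by (rule degree_le) (auto simp: coeff_pderiv coeff_eq_0)
  have cN: "coeff f (Suc N) = 0" unfolding N_def by (simp add: coeff_eq_0)
  have "dpsi psi (pstar psi f g) = (\<Sum>j\<le>N. smult (coeff f j) (dpsi psi ((that psi ^^ j) g)))"
    by (simp add: pstar_def N_def dpsi_sum dpsi_smult)
  also have "\<dots> = (\<Sum>j\<le>N. smult (coeff f j) ((that psi ^^ j) (dpsi psi g)))
      + (\<Sum>j\<le>N. smult (coeff f j * of_nat j) ((that psi ^^ (j - 1)) g))"
    by (simp add: comm_pow[OF assms] smult_add_right sum.distrib)
  also have "(\<Sum>j\<le>N. smult (coeff f j * of_nat j) ((that psi ^^ (j - 1)) g))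
       = (\<Sum>j\<le>Suc N. smult (coeff f j * of_nat j) ((that psi ^^ (j - 1)) g))"
    using cN by simp
  also have "\<dots> = (\<Sum>j\<le>N. smult (coeff f (Suc j) * of_nat (Suc j)) ((that psi ^^ j) g))"
    by (subst sum.atMost_Suc_shift) simp
  also have "\<dots> = pstar psi (pderiv f) g"
    by (subst pstar_eq[OF d']) (simp add: coeff_pderiv mult.commute)
  finally show ?thesis by (simp add: pstar_def N_def)
qed

lemma ipsi_dpsi: assumes "\<forall>n. psi n \<noteq> 0"
  shows "ipsi psi (dpsi psi h) = h - [:coeff h 0:]"
proof -
  have nz: "\<And>n. npsi psi n \<noteq> (0::'a::field)" using npsi_nz[OF assms] .
  show ?thesis
  proof (rule poly_eqI)
    fix n show "coeff (ipsi psi (dpsi psi h)) n = coeff (h - [:coeff h 0:]) n"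
      by (cases n) (simp_all add: coeff_dpsi coeff_ipsi nz)
  qed
qed

lemma main_gen: assumes "\<forall>n. psi n \<noteq> 0"
  shows "dint psi a b (pstar psi f (dpsi psi g))
              = poly (pstar psi f g) b - poly (pstar psi f g) a
                - dint psi a b (pstar psi (pderiv f) (g :: 'a::field poly))"
proof -
  have "pstar psi f (dpsi psi g) = dpsi psi (pstar psi f g) - pstar psi (pderiv f) g"
    using prod_rule[OF assms] by simp
  then have "ipsi psi (pstar psi f (dpsi psi g)) = ipsi psi (dpsi psi (pstar psi f g)) - ipsi psi (pstar psi (pderiv f) g)"
    by (simp only: ipsi_diff)
  also have "\<dots> = pstar psi f g - [:coeff (pstar psi f g) 0:] - ipsi psi (pstar psi (pderiv f) g)"
    by (simp only: ipsi_dpsi[OF assms])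
  finally have e: "ipsi psi (pstar psi f (dpsi psi g)) = pstar psi f g - [:coeff (pstar psi f g) 0:] - ipsi psi (pstar psi (pderiv f) g)" .
  show ?thesis unfolding dint_def e by (simp add: algebra_simps)
qed

theorem mainTheorem7:
  shows "(\<forall>(psi :: nat \<Rightarrow> real) (f :: real poly) g a b. (\<forall>n. psi n \<noteq> 0) \<longrightarrow>
            dint psi a b (pstar psi f (dpsi psi g))
              = poly (pstar psi f g) b - poly (pstar psi f g) a
                - dint psi a b (pstar psi (pderiv f) g))
       \<and> (\<forall>(psi :: nat \<Rightarrow> complex) (f :: complex poly) g a b. (\<forall>n. psi n \<noteq> 0) \<longrightarrow>
            dint psi a b (pstar psi f (dpsi psi g))
              = poly (pstar psi f g) b - poly (pstar psi f g) a
                - dint psi a b (pstar psi (pderiv f) g))"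
proof (intro conjI allI impI)
  fix psi :: "nat \<Rightarrow> real" and f g :: "real poly" and a b :: real
  assume "\<forall>n. psi n \<noteq> 0"
  then show "dint psi a b (pstar psi f (dpsi psi g)) = poly (pstar psi f g) b - poly (pstar psi f g) a - dint psi a b (pstar psi (pderiv f) g)"
    by (rule main_gen)
next
  fix psi :: "nat \<Rightarrow> complex" and f g :: "complex poly" and a b :: complex
  assume "\<forall>n. psi n \<noteq> 0"
  then show "dint psi a b (pstar psi f (dpsi psi g)) = poly (pstar psi f g) b - poly (pstar psi f g) a - dint psi a b (pstar psi (pderiv f) g)"
    by (rule main_gen)
qed

end
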